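(* Let $(\mathfrak g,r)$ be a triangular Lie bialgebra with $r:\mathfrak g^*\to\mathfrak g$ invertible. For $\lambda,\mu\in\mathbb R$, $\lambda\neq0$, define $J_{\lambda,\mu}:\mathcal D(\mathfrak g)\to\mathcal D(\mathfrak g)$ by $J_{\lambda,\mu}(x,a^* )=(\lambda r(a^* )+\mu x,\ \frac{-1-\mu^2}{\lambda}r^{-1}(x)-\mu a^* )$, and let $\tilde r_{\pm,\lambda,\mu}=J_{\lambda,\mu}\varphi^{-1}\pm\varphi^{-1}$, regarded as elements of $\mathcal D(\mathfrak g)\otimes\mathcal D(\mathfrak g)$. Then for each sign $\tilde r_{\pm,\lambda,\mu}$ is a solution of the type II CYBE in $\mathcal D(\mathfrak g)$ whose symmetric part is invariant and invertible; hence $(\mathcal D(\mathfrak g),\tilde r_{\pm,\lambda,\mu})$ is a factorizable type II quasitriangular Lie bialgebra.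
   Context: $\mathfrak g$ a finite-dimensional real Lie algebra; $t\in V\otimes V$ is identified with $t:V^*\to V$ via $\langle t(a),b\rangle=\langle a\otimes b,t\rangle$. For $t=\sum a_i\otimes b_i$: $[t_{12},t_{13}]=\sum[a_i,a_j]\otimes b_i\otimes b_j$, $[t_{12},t_{23}]=\sum a_i\otimes[b_i,a_j]\otimes b_j$, $[t_{13},t_{23}]=\sum a_i\otimes a_j\otimes[b_i,b_j]$; with $t+\sigma(t)=\sum c_k\otimes d_k$, $[t_{13}+t_{31},t_{23}+t_{32}]=\sum c_k\otimes c_l\otimes[d_k,d_l]$. CYBE: $[t_{12},t_{13}]+[t_{12},t_{23}]+[t_{13},t_{23}]=0$; type II CYBE: the same left side equals $\frac12[t_{13}+t_{31},t_{23}+t_{32}]$. $(\mathfrak g,r)$ triangular: $r$ skew-symmetric solution of the CYBE. $\langle\mathrm{ad}^*(x)a^*,y\rangle=-\langle a^*,[x,y]\rangle$; $[a^*,b^*]_\delta=\mathrm{ad}^*(r(a^* ))b^*-\mathrm{ad}^*(r(b^* ))a^*$; $\langle\mathrm{ad}^*(a^* )x,b^*\rangle=-\langle x,[a^*,b^*]_\delta\rangle$. $\mathcal D(\mathfrak g)=\mathfrak g\oplus\mathfrak g^*$ with bracket $[(x,a^* ),(y,b^* )]=([x,y]+\mathrm{ad}^*(a^* )y-\mathrm{ad}^*(b^* )x,[a^*,b^*]_\delta+\mathrm{ad}^*(x)b^*-\mathrm{ad}^*(y)a^* )$ and form $\mathfrak B_p((x,a^* ),(y,b^* ))=\langle a^*,y\rangle+\langle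 x,b^*\rangle$; $\varphi$ is defined by $\mathfrak B_p(X,Y)=\langle\varphi(X),Y\rangle$. A type II quasitriangular Lie bialgebra is a coboundary Lie bialgebra $\delta(X)=(\mathrm{ad}(X)\otimes\mathrm{id}+\mathrm{id}\otimes\mathrm{ad}(X))t$ with $t$ a solution of the type II CYBE; it is factorizable if the symmetric part of $t$ is invertible. *)

theory Defs
  imports Complex_Main
begin

text \<open>A finite-dimensional real Lie algebra g is modelled on the coordinate
space 'i \<Rightarrow> real for a finite index type 'i (a basis of g); its dual g* is modelled on the
same space with the coordinate pairing. Tensors in V \<otimes> V are coordinate arrays
'i \<Rightarrow> 'i \<Rightarrow> real with respect to the basis vectors bv p, and 3-tensors are
'i \<Rightarrow> 'i \<Rightarrow> 'i \<Rightarrow> real.\<close>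

type_synonym 'i vec = "'i \<Rightarrow> real"
type_synonym 'i bracket = "'i vec \<Rightarrow> 'i vec \<Rightarrow> 'i vec"
type_synonym 'i tensor2 = "'i \<Rightarrow> 'i \<Rightarrow> real"

definition bv :: "'i \<Rightarrow> 'i vec" where
  "bv p = (\<lambda>j. if j = p then 1 else 0)"

definition pair :: "('i::finite) vec \<Rightarrow> 'i vec \<Rightarrow> real" where
  "pair a x = (\<Sum>i\<in>UNIV. a i * x i)"

definition lie_algebra :: "('i::finite) bracket \<Rightarrow> bool" where
  "lie_algebra B \<longleftrightarrow>
     (\<forall>x y z a b. B (\<lambda>i. a * x i + b * y i) z = (\<lambda>k. a * B x z k + b * B y z k)) \<and>
     (\<forall>x y z a b. B z (\<lambda>i. a * x i + b * y i) = (\<lambda>k. a * B z x k + b * B z y k)) \<and>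
     (\<forall>x. B x x = (\<lambda>k. 0)) \<and>
     (\<forall>x y z. (\<lambda>k. B x (B y z) k + B y (B z x) k + B z (B x y) k) = (\<lambda>k. 0))"

text \<open>t \<in> V \<otimes> V viewed as the map t : V* \<rightarrow> V with \<langle>t(a),b\<rangle> = \<langle>a \<otimes> b, t\<rangle>.\<close>
definition tensor_map :: "('i::finite) tensor2 \<Rightarrow> 'i vec \<Rightarrow> 'i vec" where
  "tensor_map t a = (\<lambda>j. \<Sum>i\<in>UNIV. a i * t i j)"

definition tensor_of :: "('i vec \<Rightarrow> 'i vec) \<Rightarrow> 'i tensor2" where
  "tensor_of M = (\<lambda>p q. M (bv p) q)"

definition flip :: "'i tensor2 \<Rightarrow> 'i tensor2" where
  "flip t = (\<lambda>p q. t q p)"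

definition sym_part :: "'i tensor2 \<Rightarrow> 'i tensor2" where
  "sym_part t = (\<lambda>p q. (t p q + t q p) / 2)"

text \<open>Coordinates of [t12,t13], [t12,t23], [t13,t23].\<close>
definition T12_13 :: "('i::finite) bracket \<Rightarrow> 'i tensor2 \<Rightarrow> 'i \<Rightarrow> 'i \<Rightarrow> 'i \<Rightarrow> real" where
  "T12_13 B t u v w = (\<Sum>p\<in>UNIV. \<Sum>p'\<in>UNIV. t p v * t p' w * B (bv p) (bv p') u)"

definition T12_23 :: "('i::finite) bracket \<Rightarrow> 'i tensor2 \<Rightarrow> 'i \<Rightarrow> 'i \<Rightarrow> 'i \<Rightarrow> real" where
  "T12_23 B t u v w = (\<Sum>q\<in>UNIV. \<Sum>p'\<in>UNIV. t u q * t p' w * B (bv q) (bv p') v)"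

definition T13_23 :: "('i::finite) bracket \<Rightarrow> 'i tensor2 \<Rightarrow> 'i \<Rightarrow> 'i \<Rightarrow> 'i \<Rightarrow> real" where
  "T13_23 B t u v w = (\<Sum>q\<in>UNIV. \<Sum>q'\<in>UNIV. t u q * t v q' * B (bv q) (bv q') w)"

definition cybe_lhs :: "('i::finite) bracket \<Rightarrow> 'i tensor2 \<Rightarrow> 'i \<Rightarrow> 'i \<Rightarrow> 'i \<Rightarrow> real" where
  "cybe_lhs B t u v w = T12_13 B t u v w + T12_23 B t u v w + T13_23 B t u v w"

definition cybe :: "('i::finite) bracket \<Rightarrow> 'i tensor2 \<Rightarrow> bool" where
  "cybe B t \<longleftrightarrow> (\<forall>u v w. cybe_lhs B t u v w = 0)"

text \<open>Type II CYBE: lhs = 1/2 [t13 + t31, t23 + t32], with t + \<sigma>(t) = \<Sum> c_k \<otimes> d_k.\<close>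
definition cybe_II :: "('i::finite) bracket \<Rightarrow> 'i tensor2 \<Rightarrow> bool" where
  "cybe_II B t \<longleftrightarrow>
     (\<forall>u v w. cybe_lhs B t u v w = (1/2) * T13_23 B (\<lambda>p q. t p q + t q p) u v w)"

definition triangular :: "('i::finite) bracket \<Rightarrow> 'i tensor2 \<Rightarrow> bool" where
  "triangular B r \<longleftrightarrow> lie_algebra B \<and> (\<forall>p q. r p q = - r q p) \<and> cybe B r"

text \<open>(ad X \<otimes> id + id \<otimes> ad X) t\<close>
definition ad_tensor :: "('i::finite) bracket \<Rightarrow> 'i vec \<Rightarrow> 'i tensor2 \<Rightarrow> 'i tensor2" where
  "ad_tensor B X t = (\<lambda>u v. (\<Sum>p\<in>UNIV. t p v * B X (bv p) u) + (\<Sum>q\<in>UNIV. t u q * B X (bv q) v))"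

definition invariant_tensor :: "('i::finite) bracket \<Rightarrow> 'i tensor2 \<Rightarrow> bool" where
  "invariant_tensor B s \<longleftrightarrow> (\<forall>X. ad_tensor B X s = (\<lambda>u v. 0))"

definition coboundary :: "('i::finite) bracket \<Rightarrow> 'i tensor2 \<Rightarrow> 'i vec \<Rightarrow> 'i tensor2" where
  "coboundary B t X = ad_tensor B X t"

text \<open>Lie bialgebra (g, [,], \<delta>): \<delta> linear, skew, its dual bracket
 \<langle>[\<xi>,\<eta>], x\<rangle> = \<langle>\<xi> \<otimes> \<eta>, \<delta>(x)\<rangle> is a Lie bracket on g*, and \<delta> is a 1-cocycle.\<close>
definition cobracket_dual :: "('i::finite vec \<Rightarrow> 'i tensor2) \<Rightarrow> 'i bracket" where
  "cobracket_dual \<delta> \<xi> \<eta> = (\<lambda>k. \<Sum>p\<in>UNIV. \<Sum>q\<in>UNIV. \<xi> p * \<eta> q * \<delta> (bv k) p q)"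

definition lie_bialgebra :: "('i::finite) bracket \<Rightarrow> ('i vec \<Rightarrow> 'i tensor2) \<Rightarrow> bool" where
  "lie_bialgebra B \<delta> \<longleftrightarrow>
     lie_algebra B \<and>
     (\<forall>x y a b. \<delta> (\<lambda>i. a * x i + b * y i) = (\<lambda>u v. a * \<delta> x u v + b * \<delta> y u v)) \<and>
     (\<forall>x u v. \<delta> x u v = - \<delta> x v u) \<and>
     lie_algebra (cobracket_dual \<delta>) \<and>
     (\<forall>x y. \<delta> (B x y) = (\<lambda>u v. ad_tensor B x (\<delta> y) u v - ad_tensor B y (\<delta> x) u v))"

definition typeII_quasitriangular :: "('i::finite) bracket \<Rightarrow> 'i tensor2 \<Rightarrow> bool" where
  "typeII_quasitriangular B t \<longleftrightarrow> lie_bialgebra B (coboundary B t) \<and> cybe_II B t"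

definition factorizable_typeII :: "('i::finite) bracket \<Rightarrow> 'i tensor2 \<Rightarrow> bool" where
  "factorizable_typeII B t \<longleftrightarrow> typeII_quasitriangular B t \<and> bij (tensor_map (sym_part t))"

definition coad :: "('i::finite) bracket \<Rightarrow> 'i vec \<Rightarrow> 'i vec \<Rightarrow> 'i vec" where
  "coad B x a = (\<lambda>j. - pair a (B x (bv j)))"

definition dual_br :: "('i::finite) bracket \<Rightarrow> 'i tensor2 \<Rightarrow> 'i bracket" where
  "dual_br B r a b = (\<lambda>j. coad B (tensor_map r a) b j - coad B (tensor_map r b) a j)"

definition coad_dual :: "('i::finite) bracket \<Rightarrow> 'i tensor2 \<Rightarrow> 'i vec \<Rightarrow> 'i vec \<Rightarrow> 'i vec" where
  "coad_dual B r a x = (\<lambda>j. - pair x (dual_br B r a (bv j)))"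

text \<open>D(g) = g \<oplus> g* modelled on ('i + 'i) \<Rightarrow> real.\<close>
definition dpair :: "'i vec \<Rightarrow> 'i vec \<Rightarrow> ('i + 'i) vec" where
  "dpair x a = (\<lambda>k. case k of Inl i \<Rightarrow> x i | Inr i \<Rightarrow> a i)"

definition dfst :: "('i + 'i) vec \<Rightarrow> 'i vec" where
  "dfst X = (\<lambda>i. X (Inl i))"

definition dsnd :: "('i + 'i) vec \<Rightarrow> 'i vec" where
  "dsnd X = (\<lambda>i. X (Inr i))"

definition double_br :: "('i::finite) bracket \<Rightarrow> 'i tensor2 \<Rightarrow> ('i + 'i) bracket" where
  "double_br B r X Y =
     dpair (\<lambda>k. B (dfst X) (dfst Y) k + coad_dual B r (dsnd X) (dfst Y) k
                 - coad_dual B r (dsnd Y) (dfst X) k)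
           (\<lambda>k. dual_br B r (dsnd X) (dsnd Y) k + coad B (dfst X) (dsnd Y) k
                 - coad B (dfst Y) (dsnd X) k)"

definition Bp :: "('i::finite + 'i) vec \<Rightarrow> ('i + 'i) vec \<Rightarrow> real" where
  "Bp X Y = pair (dsnd X) (dfst Y) + pair (dfst X) (dsnd Y)"

definition phi :: "('i::finite + 'i) vec \<Rightarrow> ('i + 'i) vec" where
  "phi X = (\<lambda>k. Bp X (bv k))"

definition Jmap :: "('i::finite) tensor2 \<Rightarrow> real \<Rightarrow> real \<Rightarrow> ('i + 'i) vec \<Rightarrow> ('i + 'i) vec" where
  "Jmap r lam mu X =
     dpair (\<lambda>k. lam * tensor_map r (dsnd X) k + mu * dfst X k)
           (\<lambda>k. ((-1 - mu^2) / lam) * inv (tensor_map r) (dfst X) k - mu * dsnd X k)"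

text \<open>r~_{\<pm>,\<lambda>,\<mu>} = J \<phi>^{-1} \<pm> \<phi>^{-1}, sign \<sigma> \<in> {1,-1}, as an element of D \<otimes> D.\<close>
definition rtilde :: "('i::finite) tensor2 \<Rightarrow> real \<Rightarrow> real \<Rightarrow> real \<Rightarrow> ('i + 'i) tensor2" where
  "rtilde r lam mu \<sigma> =
     tensor_of (\<lambda>\<xi>. (\<lambda>k. Jmap r lam mu (inv phi \<xi>) k + \<sigma> * inv phi \<xi> k))"

end

theory Submission
  imports Defs
begin


definition lin :: "('a::finite vec \<Rightarrow> 'b vec) \<Rightarrow> bool" where
  "lin f \<longleftrightarrow> (\<forall>x y a b. f (\<lambda>i. a * x i + b * y i) = (\<lambda>k. a * f x k + b * f y k))"

lemma linD: "lin f \<Longrightarrow> f (\<lambda>i. a * x i + b * y i) = (\<lambda>k. a * f x k + b * f y k)"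
  unfolding lin_def by blast

lemma lin_add: "lin f \<Longrightarrow> f (\<lambda>i. x i + y i) = (\<lambda>k. f x k + f y k)"
  using linD[of f 1 x 1 y] by simp

lemma lin_smult: "lin f \<Longrightarrow> f (\<lambda>i. a * x i) = (\<lambda>k. a * f x k)"
  using linD[of f a x 0 x] by simp

lemma lin_zero: "lin f \<Longrightarrow> f (\<lambda>i. 0) = (\<lambda>k. 0)"
  using lin_smult[of f 0 "\<lambda>i. 0"] by simp

lemma lin_zero': "lin f \<Longrightarrow> f (\<lambda>i. 0) k = 0"
  using lin_zero by metis

lemma lin_neg: "lin f \<Longrightarrow> f (\<lambda>i. - x i) = (\<lambda>k. - f x k)"
  using lin_smult[of f "-1" x] by simp

lemma lin_diff: "lin f \<Longrightarrow> f (\<lambda>i. x i - y i) = (\<lambda>k. f x k - f y k)"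
  using linD[of f 1 x "-1" y] by simp

lemma lin_sum_gen: assumes LF: "lin f" and fin: "finite A" shows
   "f (\<lambda>i. \<Sum>p\<in>A. c p * v p i) = (\<lambda>k. \<Sum>p\<in>A. c p * f (v p) k)"
  using fin
proof (induction A rule: finite_induct)
  case empty then show ?case using lin_zero[OF LF] by simp
next
  case (insert p A)
  have "f (\<lambda>i. \<Sum>q\<in>insert p A. c q * v q i) = f (\<lambda>i. c p * v p i + (\<Sum>q\<in>A. c q * v q i))"
    using insert by simp
  also have "\<dots> = (\<lambda>k. c p * f (v p) k + f (\<lambda>i. (\<Sum>q\<in>A. c q * v q i)) k)"
    using linD[OF LF, of "c p" "v p" 1 "\<lambda>i. (\<Sum>q\<in>A. c q * v q i)"] by simp
  also have "\<dots> = (\<lambda>k. \<Sum>q\<in>insert p A. c q * f (v q) k)"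
    using insert by simp
  finally show ?case .
qed

lemma vec_expand: "x = (\<lambda>i. \<Sum>p\<in>UNIV. x p * bv p i)" for x :: "('a::finite) vec"
  by (rule ext) (simp add: bv_def if_distrib cong: if_cong)

lemma lin_expand: "lin f \<Longrightarrow> f x = (\<lambda>k. \<Sum>p\<in>UNIV. x p * f (bv p) k)"
  for x :: "('a::finite) vec"
  using lin_sum_gen[of f UNIV x bv] vec_expand[of x] by simp

lemma lin_expand': "lin f \<Longrightarrow> f x k = (\<Sum>p\<in>UNIV. x p * f (bv p) k)"
  for x :: "('a::finite) vec"
  using lin_expand by metis

lemma lin_ext: "lin f \<Longrightarrow> lin g \<Longrightarrow> (\<And>p. f (bv p) = g (bv p)) \<Longrightarrow> f x = g x"
  for x :: "('a::finite) vec"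
  using lin_expand[of f x] lin_expand[of g x] by simp

lemma lin_comp: "lin f \<Longrightarrow> lin g \<Longrightarrow> lin (\<lambda>x. f (g x))"
  unfolding lin_def by simp

lemma lin_I: "(\<And>x y a b. f (\<lambda>i. a * x i + b * y i) = (\<lambda>k. a * f x k + b * f y k)) \<Longrightarrow> lin f"
  unfolding lin_def by blast

lemma lin_combo: "lin f \<Longrightarrow> lin g \<Longrightarrow> lin (\<lambda>x k. c * f x k + d * g x k)"
  unfolding lin_def by (simp add: algebra_simps)

lemma pair_add2: "pair a (\<lambda>i. x i + y i) = pair a x + pair a y"
  by (simp add: pair_def algebra_simps sum.distrib)
lemma pair_add1: "pair (\<lambda>i. x i + y i) a = pair x a + pair y a"
  by (simp add: pair_def algebra_simps sum.distrib)
lemma pair_diff2: "pair a (\<lambda>i. x i - y i) = pair a x - pair a y"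
  by (simp add: pair_def algebra_simps sum_subtractf)
lemma pair_diff1: "pair (\<lambda>i. x i - y i) a = pair x a - pair y a"
  by (simp add: pair_def algebra_simps sum_subtractf)
lemma pair_smult2: "pair a (\<lambda>i. c * x i) = c * pair a x"
  by (simp add: pair_def algebra_simps sum_distrib_left)
lemma pair_smult1: "pair (\<lambda>i. c * x i) a = c * pair x a"
  by (simp add: pair_def algebra_simps sum_distrib_left)
lemma pair_neg2: "pair a (\<lambda>i. - x i) = - pair a x"
  by (simp add: pair_def sum_negf)
lemma pair_neg1: "pair (\<lambda>i. - x i) a = - pair x a"
  by (simp add: pair_def sum_negf)
lemma pair_zero2: "pair a (\<lambda>i. 0) = 0" by (simp add: pair_def)
lemma pair_zero1: "pair (\<lambda>i. 0) a = 0" by (simp add: pair_def)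
lemma pair_comm: "pair a x = pair x a" by (simp add: pair_def mult.commute)
lemma pair_bv2: "pair a (bv j) = a j"
proof -
  have "pair a (bv j) = (\<Sum>i\<in>UNIV. if i = j then a i else 0)"
    unfolding pair_def bv_def by (rule sum.cong) auto
  then show ?thesis by simp
qed
lemma pair_bv1: "pair (bv j) a = a j"
  using pair_bv2[of a j] by (simp add: pair_def mult.commute)
lemma pair_sum2: "pair a (\<lambda>k. \<Sum>j\<in>UNIV. c j * v j k) = (\<Sum>j\<in>UNIV. c j * pair a (v j))"
  unfolding pair_def by (simp add: sum_distrib_left algebra_simps) (rule sum.swap)

lemmas pair_simps = pair_add2 pair_add1 pair_diff2 pair_diff1 pair_smult2 pair_smult1
  pair_neg2 pair_neg1 pair_zero2 pair_zero1 pair_bv2 pair_bv1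

lemma vec_eq_pair: "(\<And>c. pair c V = pair c W) \<Longrightarrow> V = W"
proof (rule ext)
  fix j assume "\<And>c. pair c V = pair c W"
  from this[of "bv j"] show "V j = W j" by (simp add: pair_bv1)
qed

lemma lin_pair_rep: "lin (\<lambda>y. (\<lambda>j. pair (f (bv j)) y))" 
  by (rule lin_I) (simp add: pair_simps)

lemma lie_lin1: "lie_algebra B \<Longrightarrow> lin (\<lambda>x. B x z)"
  unfolding lie_algebra_def lin_def by blast
lemma lie_lin2: "lie_algebra B \<Longrightarrow> lin (B z)"
  unfolding lie_algebra_def lin_def by blast

lemma lie_skew: "lie_algebra B \<Longrightarrow> B y x = (\<lambda>k. - B x y k)"
proof -
  assume L: "lie_algebra B"
  have "B (\<lambda>i. 1 * x i + 1 * y i) (\<lambda>i. 1 * x i + 1 * y i) = (\<lambda>k. 0)"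
    using L unfolding lie_algebra_def by blast
  moreover have "B (\<lambda>i. 1 * x i + 1 * y i) (\<lambda>i. 1 * x i + 1 * y i)
     = (\<lambda>k. B x x k + B x y k + B y x k + B y y k)"
    using linD[OF lie_lin1[OF L, where z="\<lambda>i. 1 * x i + 1 * y i"], where a=1 and x=x and b=1 and y=y]
      linD[OF lie_lin2[OF L, where z=x], where a=1 and x=x and b=1 and y=y]
      linD[OF lie_lin2[OF L, where z=y], where a=1 and x=x and b=1 and y=y]
    by (simp add: algebra_simps)
  moreover have "B x x = (\<lambda>k. 0)" "B y y = (\<lambda>k. 0)" using L unfolding lie_algebra_def by auto
  ultimately show ?thesis by (auto simp: fun_eq_iff) (metis add.commute add_eq_0_iff)
qed

lemma lie_skew': "lie_algebra B \<Longrightarrow> B y x k = - B x y k"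
  using lie_skew by metis

lemma lie_jacobi: "lie_algebra B \<Longrightarrow> B x (B y z) k + B y (B z x) k + B z (B x y) k = 0"
  unfolding lie_algebra_def by (metis (no_types, lifting))

lemma lie_self: "lie_algebra B \<Longrightarrow> B x x = (\<lambda>k. 0)"
  unfolding lie_algebra_def by blast

lemma bil_expand: "lie_algebra B \<Longrightarrow>
  B x y k = (\<Sum>p\<in>UNIV. \<Sum>q\<in>UNIV. x p * y q * B (bv p) (bv q) k)"
proof -
  assume L: "lie_algebra B"
  have "B x y k = (\<Sum>p\<in>UNIV. x p * B (bv p) y k)" using lin_expand'[OF lie_lin1[OF L]] .
  also have "\<dots> = (\<Sum>p\<in>UNIV. x p * (\<Sum>q\<in>UNIV. y q * B (bv p) (bv q) k))"
    using lin_expand'[OF lie_lin2[OF L]] by metis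
  finally show ?thesis by (simp add: sum_distrib_left mult.assoc)
qed

lemma T12_13_vec: "lie_algebra B \<Longrightarrow> T12_13 B t u v w = B (\<lambda>p. t p v) (\<lambda>p. t p w) u"
  unfolding T12_13_def by (simp add: bil_expand)
lemma T12_23_vec: "lie_algebra B \<Longrightarrow> T12_23 B t u v w = B (t u) (\<lambda>p. t p w) v"
  unfolding T12_23_def by (simp add: bil_expand)
lemma T13_23_vec: "lie_algebra B \<Longrightarrow> T13_23 B t u v w = B (t u) (t v) w"
  unfolding T13_23_def by (simp add: bil_expand)



locale dbl =
  fixes Bd :: "('n::finite) bracket" and ph :: "'n vec \<Rightarrow> 'n vec" and J :: "'n vec \<Rightarrow> 'n vec"
    and \<sigma> :: real
  assumes L: "lie_algebra Bd"
  and ph_lin: "lin ph" and ph_inv: "\<And>X. ph (ph X) = X" and ph_sym: "\<And>X Y. pair (ph X) Y = pair X (ph Y)"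
  and binv: "\<And>X Y Z. pair (ph (Bd X Y)) Z = pair (ph X) (Bd Y Z)"
  and J_lin: "lin J" and J_skew: "\<And>X Y. pair (ph (J X)) Y = - pair (ph X) (J Y)"
  and nij: "\<And>X Y. Bd (J X) (J Y) = (\<lambda>k. J (Bd (J X) Y) k + J (Bd X (J Y)) k + Bd X Y k)"
  and sig: "\<sigma> * \<sigma> = 1"
begin

definition G where "G X Y = pair (ph X) Y"

lemma G_sym: "G X Y = G Y X"
  unfolding G_def ph_sym[of X] by (rule pair_comm)

lemma coord: "X u = G X (ph (bv u))"
  unfolding G_def ph_sym ph_inv pair_bv2 ..

lemma G_inv: "G (Bd X Y) Z = G X (Bd Y Z)" unfolding G_def by (rule binv)
lemma G_J: "G (J X) Y = - G X (J Y)" unfolding G_def by (rule J_skew)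

lemmas ph_add = lin_add[OF ph_lin] and ph_diff = lin_diff[OF ph_lin] and ph_smult = lin_smult[OF ph_lin]
  and ph_neg = lin_neg[OF ph_lin]
lemmas J_add = lin_add[OF J_lin] and J_diff = lin_diff[OF J_lin] and J_smult = lin_smult[OF J_lin]
  and J_neg = lin_neg[OF J_lin]

lemma Bd_add1: "Bd (\<lambda>i. x i + y i) z = (\<lambda>k. Bd x z k + Bd y z k)"
  using lin_add[OF lie_lin1[OF L]] by simp
lemma Bd_diff1: "Bd (\<lambda>i. x i - y i) z = (\<lambda>k. Bd x z k - Bd y z k)"
  using lin_diff[OF lie_lin1[OF L]] by simp
lemma Bd_smult1: "Bd (\<lambda>i. a * x i) z = (\<lambda>k. a * Bd x z k)"
  using lin_smult[OF lie_lin1[OF L]] by simp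
lemma Bd_neg1: "Bd (\<lambda>i. - x i) z = (\<lambda>k. - Bd x z k)"
  using lin_neg[OF lie_lin1[OF L]] by simp
lemma Bd_add2: "Bd z (\<lambda>i. x i + y i) = (\<lambda>k. Bd z x k + Bd z y k)"
  using lin_add[OF lie_lin2[OF L]] by simp
lemma Bd_diff2: "Bd z (\<lambda>i. x i - y i) = (\<lambda>k. Bd z x k - Bd z y k)"
  using lin_diff[OF lie_lin2[OF L]] by simp
lemma Bd_smult2: "Bd z (\<lambda>i. a * x i) = (\<lambda>k. a * Bd z x k)"
  using lin_smult[OF lie_lin2[OF L]] by simp
lemma Bd_neg2: "Bd z (\<lambda>i. - x i) = (\<lambda>k. - Bd z x k)"
  using lin_neg[OF lie_lin2[OF L]] by simp
lemmas Bd_lin = Bd_add1 Bd_diff1 Bd_smult1 Bd_neg1 Bd_add2 Bd_diff2 Bd_smult2 Bd_neg2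

lemma G_add2: "G X (\<lambda>i. x i + y i) = G X x + G X y" unfolding G_def by (simp add: pair_simps)
lemma G_diff2: "G X (\<lambda>i. x i - y i) = G X x - G X y" unfolding G_def by (simp add: pair_simps)
lemma G_smult2: "G X (\<lambda>i. a * x i) = a * G X x" unfolding G_def by (simp add: pair_simps)
lemma G_neg2: "G X (\<lambda>i. - x i) = - G X x" unfolding G_def by (simp add: pair_simps)
lemma G_add1: "G (\<lambda>i. x i + y i) X = G x X + G y X" by (simp only: G_sym[of _ X] G_add2)
lemma G_diff1: "G (\<lambda>i. x i - y i) X = G x X - G y X" by (simp only: G_sym[of _ X] G_diff2)
lemma G_smult1: "G (\<lambda>i. a * x i) X = a * G x X" by (simp only: G_sym[of _ X] G_smult2)
lemma G_neg1: "G (\<lambda>i. - x i) X = - G x X" by (simp only: G_sym[of _ X] G_neg2)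
lemmas G_lin = G_add2 G_diff2 G_smult2 G_neg2 G_add1 G_diff1 G_smult1 G_neg1

lemma Bd_skew: "Bd y x = (\<lambda>k. - Bd x y k)" using lie_skew[OF L] .

definition Rp where "Rp Z = (\<lambda>k. J Z k + \<sigma> * Z k)"
definition Rm where "Rm Z = (\<lambda>k. \<sigma> * Z k - J Z k)"

lemma G_Rm: "G (Rm A) C = G A (Rp C)"
  unfolding Rm_def Rp_def by (simp add: G_lin G_J)

lemma VEC: "(\<lambda>k. Rp (Bd (Rm Z) X) k + Bd (Rp X) (Rm Z) k - Rm (Bd (Rp X) Z) k) = (\<lambda>k. -2 * Bd X Z k)"
proof (rule ext)
  fix k
  have s1: "Bd Z X = (\<lambda>k. - Bd X Z k)" "Bd (J Z) X = (\<lambda>k. - Bd X (J Z) k)"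
    "Bd (J Z) (J X) = (\<lambda>k. - Bd (J X) (J Z) k)" "Bd Z (J X) = (\<lambda>k. - Bd (J X) Z k)"
    by (rule Bd_skew)+
  have n: "Bd (J X) (J Z) k = J (Bd (J X) Z) k + J (Bd X (J Z)) k + Bd X Z k"
    using nij[of X Z] by simp
  show "Rp (Bd (Rm Z) X) k + Bd (Rp X) (Rm Z) k - Rm (Bd (Rp X) Z) k = -2 * Bd X Z k"
    unfolding Rp_def Rm_def
    by (simp add: Bd_lin J_add J_diff J_smult J_neg s1 n algebra_simps sig)
qed

lemma KEY: "G (Bd (Rm Y) (Rm Z)) X + G (Bd (Rp X) (Rm Z)) Y + G (Bd (Rp X) (Rp Y)) Z
   = 2 * G (Bd X Y) Z"
proof -
  have t1: "G (Bd (Rm Y) (Rm Z)) X = G Y (Rp (Bd (Rm Z) X))"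
    by (simp only: G_inv G_Rm)
  have t2: "G (Bd (Rp X) (Rm Z)) Y = G Y (Bd (Rp X) (Rm Z))" by (rule G_sym)
  have t3: "G (Bd (Rp X) (Rp Y)) Z = - G Y (Rm (Bd (Rp X) Z))"
  proof -
    have "G (Bd (Rp X) (Rp Y)) Z = G (Rp X) (Bd (Rp Y) Z)" by (rule G_inv)
    also have "\<dots> = - G (Rp X) (Bd Z (Rp Y))" using Bd_skew[of Z "Rp Y"] by (simp add: G_neg2)
    also have "\<dots> = - G (Bd (Rp X) Z) (Rp Y)" by (simp add: G_inv)
    also have "\<dots> = - G (Rm (Bd (Rp X) Z)) Y" by (simp add: G_Rm)
    finally show ?thesis using G_sym[of Y] by simp
  qed
  have t4: "2 * G (Bd X Y) Z = G Y (\<lambda>k. -2 * Bd X Z k)"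
  proof -
    have "G (Bd X Y) Z = G X (Bd Y Z)" by (rule G_inv)
    also have "\<dots> = - G X (Bd Z Y)" using Bd_skew[of Z Y] by (simp add: G_neg2)
    also have "\<dots> = - G (Bd X Z) Y" by (simp add: G_inv)
    finally show ?thesis by (simp add: G_lin G_sym[of Y])
  qed
  show ?thesis unfolding t1 t2 t3 t4 VEC[symmetric] by (simp add: G_lin)
qed


definition rt where "rt = tensor_of (\<lambda>\<xi> k. J (ph \<xi>) k + \<sigma> * ph \<xi> k)"

abbreviation f where "f u \<equiv> ph (bv u)"

lemma rt_row: "rt u = Rp (f u)"
  unfolding rt_def tensor_of_def Rp_def by simp

lemma J_swap: "J (f p) v = - J (f v) p"
proof -
  have "J (f p) v = G (J (f p)) (f v)" by (rule coord)
  also have "\<dots> = - G (f p) (J (f v))" by (rule G_J)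
  also have "\<dots> = - G (J (f v)) (f p)" by (simp add: G_sym[of "f p"])
  also have "\<dots> = - J (f v) p" by (simp add: coord[symmetric])
  finally show ?thesis .
qed

lemma ph_swap: "f p v = f v p"
proof -
  have "f p v = G (f p) (f v)" by (rule coord)
  also have "\<dots> = G (f v) (f p)" by (rule G_sym)
  finally show ?thesis by (simp add: coord[symmetric])
qed

lemma rt_col: "(\<lambda>p. rt p v) = Rm (f v)"
proof (rule ext)
  fix p
  show "rt p v = Rm (f v) p"
    unfolding rt_def tensor_of_def Rm_def using J_swap[of p v] ph_swap[of p v] by simp
qed

lemma rt_sym: "rt p q + rt q p = 2 * \<sigma> * f p q"
  unfolding rt_def tensor_of_def by (simp add: J_swap[of q p] ph_swap[of q p])

lemma cybeII: "cybe_II Bd rt"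
  unfolding cybe_II_def cybe_lhs_def
proof (intro allI)
  fix u v w
  have e1: "T12_13 Bd rt u v w = G (Bd (Rm (f v)) (Rm (f w))) (f u)"
    by (simp add: T12_13_vec[OF L] rt_col coord[symmetric])
  have e2: "T12_23 Bd rt u v w = G (Bd (Rp (f u)) (Rm (f w))) (f v)"
    unfolding T12_23_vec[OF L] rt_col by (simp add: rt_row coord[symmetric])
  have e3: "T13_23 Bd rt u v w = G (Bd (Rp (f u)) (Rp (f v))) (f w)"
    by (simp add: T13_23_vec[OF L] rt_row coord[symmetric])
  have sy: "(\<lambda>p q. rt p q + rt q p) = (\<lambda>p q. 2 * \<sigma> * f p q)"
    by (simp add: rt_sym)
  have e4: "T13_23 Bd (\<lambda>p q. rt p q + rt q p) u v w = 4 * G (Bd (f u) (f v)) (f w)"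
  proof -
    have "T13_23 Bd (\<lambda>p q. rt p q + rt q p) u v w = Bd (\<lambda>q. (2 * \<sigma>) * f u q) (\<lambda>q. (2 * \<sigma>) * f v q) w"
      unfolding sy T13_23_vec[OF L] by simp
    also have "\<dots> = 4 * (\<sigma> * \<sigma>) * Bd (f u) (f v) w" by (simp add: Bd_lin)
    finally show ?thesis by (simp add: sig coord[symmetric])
  qed
  show "T12_13 Bd rt u v w + T12_23 Bd rt u v w + T13_23 Bd rt u v w =
         1 / 2 * T13_23 Bd (\<lambda>p q. rt p q + rt q p) u v w"
    unfolding e1 e2 e3 e4 KEY by simp
qed

lemma ad_vec: "ad_tensor Bd X t u v = Bd X (\<lambda>p. t p v) u + Bd X (t u) v"
proof -
  have a: "Bd X (\<lambda>p. t p v) u = (\<Sum>p\<in>UNIV. t p v * Bd X (bv p) u)"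
    using lin_expand'[OF lie_lin2[OF L], where x="\<lambda>p. t p v"] by simp
  have b: "Bd X (t u) v = (\<Sum>p\<in>UNIV. t u p * Bd X (bv p) v)"
    using lin_expand'[OF lie_lin2[OF L], where x="t u"] by simp
  show ?thesis unfolding ad_tensor_def a b ..
qed

lemma G_adskew: "G (Bd X A) C = - G (Bd X C) A"
proof -
  have "G (Bd X A) C = - G (Bd A X) C" using Bd_skew[of A X] by (simp add: G_lin)
  also have "\<dots> = - G A (Bd X C)" by (simp add: G_inv)
  finally show ?thesis by (simp add: G_sym[of A])
qed

lemma ad_f_skew: "Bd X (f v) u = - Bd X (f u) v"
  using G_adskew[of X "f v" "f u"] by (simp add: coord[symmetric])

lemma sym_rt: "sym_part rt = (\<lambda>p q. \<sigma> * f p q)"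
  unfolding sym_part_def by (simp add: rt_sym)

lemma invariant: "invariant_tensor Bd (sym_part rt)"
  unfolding invariant_tensor_def
proof (intro allI ext)
  fix X u v
  have "ad_tensor Bd X (sym_part rt) u v = Bd X (\<lambda>p. \<sigma> * f v p) u + Bd X (\<lambda>q. \<sigma> * f u q) v"
  proof -
    have "(\<lambda>p. \<sigma> * f p v) = (\<lambda>p. \<sigma> * f v p)" using ph_swap[of _ v] by presburger
    then show ?thesis unfolding ad_vec sym_rt by simp
  qed
  also have "\<dots> = 0" by (simp add: Bd_lin ad_f_skew[of X v u])
  finally show "ad_tensor Bd X (sym_part rt) u v = 0" .
qed

lemma tm_sym: "tensor_map (sym_part rt) = (\<lambda>a j. \<sigma> * ph a j)"
proof (intro ext)
  fix a j
  show "tensor_map (sym_part rt) a j = \<sigma> * ph a j"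
    unfolding tensor_map_def sym_rt lin_expand'[OF ph_lin, of a j]
    by (simp add: sum_distrib_left algebra_simps)
qed

lemma bij_sym: "bij (tensor_map (sym_part rt))"
proof -
  let ?g = "\<lambda>a j. \<sigma> * ph a j"
  have "?g \<circ> ?g = id"
    by (rule ext) (simp add: ph_smult ph_inv mult.assoc[symmetric] sig)
  then show ?thesis unfolding tm_sym using o_bij by blast
qed


definition BJ where "BJ X Y = (\<lambda>k. Bd X (J Y) k + Bd (J X) Y k)"

lemma lin_Rm: "lin Rm"
  unfolding Rm_def by (rule lin_I) (simp add: J_add J_smult algebra_simps)
lemma lin_Rp: "lin Rp"
  unfolding Rp_def by (rule lin_I) (simp add: J_add J_smult algebra_simps)

lemma G_mv: "G X (Bd e Z) = - G (Bd X Z) e"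
proof -
  have "G X (Bd e Z) = G (Bd X e) Z" by (simp add: G_inv)
  also have "\<dots> = - G (Bd e X) Z" using Bd_skew[of e X] by (simp add: G_lin)
  also have "\<dots> = - G e (Bd X Z)" by (simp add: G_inv)
  finally show ?thesis by (simp add: G_sym[of e])
qed

lemma pair_ph: "pair \<xi> W = G (ph \<xi>) W"
  unfolding G_def ph_inv ..

lemma cobr_eq: "cobracket_dual (coboundary Bd rt) \<xi> \<eta> = ph (BJ (ph \<xi>) (ph \<eta>))"
proof (rule ext)
  fix k
  let ?X = "ph \<xi>" and ?Y = "ph \<eta>" and ?e = "bv k :: 'n vec"
  have d: "coboundary Bd rt ?e p q = Bd ?e (Rm (f q)) p + Bd ?e (Rp (f p)) q" for p q
    unfolding coboundary_def ad_vec rt_col unfolding rt_row ..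
  have A: "(\<Sum>q\<in>UNIV. \<eta> q * Bd ?e (Rm (f q)) p) = Bd ?e (Rm ?Y) p" for p
  proof -
    have "lin (\<lambda>y. Bd ?e (Rm (ph y)))"
      using lin_comp[OF lie_lin2[OF L, of ?e] lin_comp[OF lin_Rm ph_lin]] by simp
    from lin_expand'[OF this, of \<eta> p] show ?thesis by simp
  qed
  have B: "(\<Sum>p\<in>UNIV. \<xi> p * pair \<eta> (Bd ?e (Rp (f p)))) = pair \<eta> (Bd ?e (Rp ?X))"
  proof -
    have "lin (\<lambda>y. Bd ?e (Rp (ph y)))"
      using lin_comp[OF lie_lin2[OF L, of ?e] lin_comp[OF lin_Rp ph_lin]] by simp
    from lin_expand[OF this, of \<xi>] have "Bd ?e (Rp ?X) = (\<lambda>k. \<Sum>p\<in>UNIV. \<xi> p * Bd ?e (Rp (f p)) k)" .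
    then show ?thesis by (simp add: pair_sum2)
  qed
  have "cobracket_dual (coboundary Bd rt) \<xi> \<eta> k
     = (\<Sum>p\<in>UNIV. \<Sum>q\<in>UNIV. \<xi> p * \<eta> q * Bd ?e (Rm (f q)) p)
     + (\<Sum>p\<in>UNIV. \<Sum>q\<in>UNIV. \<xi> p * \<eta> q * Bd ?e (Rp (f p)) q)"
    unfolding cobracket_dual_def d by (simp add: algebra_simps sum.distrib)
  also have "\<dots> = (\<Sum>p\<in>UNIV. \<xi> p * (\<Sum>q\<in>UNIV. \<eta> q * Bd ?e (Rm (f q)) p))
     + (\<Sum>p\<in>UNIV. \<xi> p * pair \<eta> (Bd ?e (Rp (f p))))"
    by (simp add: sum_distrib_left pair_def mult.assoc)
  also have "\<dots> = pair \<xi> (Bd ?e (Rm ?Y)) + pair \<eta> (Bd ?e (Rp ?X))"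
    unfolding A B by (simp add: pair_def)
  also have "\<dots> = G ?X (Bd ?e (Rm ?Y)) + G ?Y (Bd ?e (Rp ?X))"
    by (simp add: pair_ph)
  also have "\<dots> = - G (Bd ?X (Rm ?Y)) ?e - G (Bd ?Y (Rp ?X)) ?e"
    by (simp add: G_mv)
  also have "\<dots> = G (BJ ?X ?Y) ?e"
  proof -
    have s: "Bd ?Y ?X = (\<lambda>k. - Bd ?X ?Y k)" "Bd ?Y (J ?X) = (\<lambda>k. - Bd (J ?X) ?Y k)"
      by (rule Bd_skew)+
    show ?thesis unfolding Rm_def Rp_def BJ_def by (simp add: Bd_lin s G_lin)
  qed
  also have "\<dots> = ph (BJ ?X ?Y) k"
    unfolding G_def pair_bv2 ..
  finally show "cobracket_dual (coboundary Bd rt) \<xi> \<eta> k = ph (BJ ?X ?Y) k" .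
qed

lemma J_BJ: "J (BJ Y Z) = (\<lambda>k. Bd (J Y) (J Z) k - Bd Y Z k)"
  unfolding BJ_def nij by (simp add: J_add fun_eq_iff)

lemma Jac_BJ: "BJ X (BJ Y Z) k + BJ Y (BJ Z X) k + BJ Z (BJ X Y) k = 0"
proof -
  have e: "BJ X (BJ Y Z) k = Bd X (Bd (J Y) (J Z)) k - Bd X (Bd Y Z) k
     + Bd (J X) (Bd Y (J Z)) k + Bd (J X) (Bd (J Y) Z) k" for X Y Z
    unfolding BJ_def[of X] J_BJ by (simp add: Bd_lin BJ_def)
  show ?thesis unfolding e
    using lie_jacobi[OF L, of X Y Z k] lie_jacobi[OF L, of X "J Y" "J Z" k]
      lie_jacobi[OF L, of Y "J Z" "J X" k] lie_jacobi[OF L, of Z "J X" "J Y" k]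
    by linarith
qed

lemma lie_cobr: "lie_algebra (cobracket_dual (coboundary Bd rt))"
proof -
  have fe: "cobracket_dual (coboundary Bd rt) = (\<lambda>\<xi> \<eta>. ph (BJ (ph \<xi>) (ph \<eta>)))"
    by (intro ext) (simp add: cobr_eq)
  show ?thesis unfolding fe lie_algebra_def
  proof (intro conjI allI)
    fix x y z :: "'n vec" and a b :: real
    show "ph (BJ (ph (\<lambda>i. a * x i + b * y i)) (ph z)) = (\<lambda>k. a * ph (BJ (ph x) (ph z)) k + b * ph (BJ (ph y) (ph z)) k)"
      unfolding BJ_def by (simp add: ph_add ph_smult J_add J_smult Bd_lin algebra_simps)
    show "ph (BJ (ph z) (ph (\<lambda>i. a * x i + b * y i))) = (\<lambda>k. a * ph (BJ (ph z) (ph x)) k + b * ph (BJ (ph z) (ph y)) k)"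
      unfolding BJ_def by (simp add: ph_add ph_smult J_add J_smult Bd_lin algebra_simps)
  next
    fix x :: "'n vec"
    have "BJ (ph x) (ph x) = (\<lambda>k. 0)"
      unfolding BJ_def using Bd_skew[of "ph x" "J (ph x)"] by simp
    then show "ph (BJ (ph x) (ph x)) = (\<lambda>k. 0)" using lin_zero[OF ph_lin] by simp
  next
    fix x y z :: "'n vec"
    have "(\<lambda>k. ph (BJ (ph x) (ph (ph (BJ (ph y) (ph z))))) k + ph (BJ (ph y) (ph (ph (BJ (ph z) (ph x))))) k
           + ph (BJ (ph z) (ph (ph (BJ (ph x) (ph y))))) k)
        = ph (\<lambda>k. BJ (ph x) (BJ (ph y) (ph z)) k + BJ (ph y) (BJ (ph z) (ph x)) k + BJ (ph z) (BJ (ph x) (ph y)) k)"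
      by (simp add: ph_inv ph_add)
    also have "\<dots> = ph (\<lambda>k. 0)" by (simp add: Jac_BJ)
    also have "\<dots> = (\<lambda>k. 0)" by (rule lin_zero[OF ph_lin])
    finally show "(\<lambda>k. ph (BJ (ph x) (ph (ph (BJ (ph y) (ph z))))) k + ph (BJ (ph y) (ph (ph (BJ (ph z) (ph x))))) k
           + ph (BJ (ph z) (ph (ph (BJ (ph x) (ph y))))) k) = (\<lambda>k. 0)" .
  qed
qed

lemma ad_cocycle: "ad_tensor Bd (Bd x y) t = (\<lambda>u v. ad_tensor Bd x (ad_tensor Bd y t) u v - ad_tensor Bd y (ad_tensor Bd x t) u v)"
proof (intro ext)
  fix u v
  have ex: "Bd a W c = (\<Sum>p\<in>UNIV. W p * Bd a (bv p) c)" for a W c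
    using lin_expand'[OF lie_lin2[OF L], where x=W] by simp
  have cross: "Bd x (\<lambda>p. Bd y (t p) v) u = Bd y (\<lambda>q. Bd x (\<lambda>p. t p q) u) v" for x y
  proof -
    have "Bd x (\<lambda>p. Bd y (t p) v) u = (\<Sum>p\<in>UNIV. (\<Sum>q\<in>UNIV. t p q * Bd y (bv q) v) * Bd x (bv p) u)"
      unfolding ex[of x "\<lambda>p. Bd y (t p) v" u] by (simp only: ex[of y "t _" v])
    also have "\<dots> = (\<Sum>p\<in>UNIV. \<Sum>q\<in>UNIV. t p q * Bd y (bv q) v * Bd x (bv p) u)"
      by (simp add: sum_distrib_right)
    also have "\<dots> = (\<Sum>q\<in>UNIV. \<Sum>p\<in>UNIV. t p q * Bd y (bv q) v * Bd x (bv p) u)"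
      by (rule sum.swap)
    also have "\<dots> = (\<Sum>q\<in>UNIV. (\<Sum>p\<in>UNIV. t p q * Bd x (bv p) u) * Bd y (bv q) v)"
      by (simp add: sum_distrib_left sum_distrib_right mult_ac)
    also have "\<dots> = Bd y (\<lambda>q. Bd x (\<lambda>p. t p q) u) v"
      unfolding ex[of y "\<lambda>q. Bd x (\<lambda>p. t p q) u" v] by (simp only: ex[of x "\<lambda>p. t p _" u])
    finally show ?thesis .
  qed
  have colad: "(\<lambda>p. ad_tensor Bd y t p v) = (\<lambda>p. Bd y (\<lambda>p. t p v) p + Bd y (t p) v)" for y
    by (simp add: ad_vec)
  have rowad: "ad_tensor Bd y t u = (\<lambda>q. Bd y (\<lambda>p. t p q) u + Bd y (t u) q)" for y
    by (rule ext) (rule ad_vec)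
  have jac: "Bd x (Bd y W) c - Bd y (Bd x W) c = Bd (Bd x y) W c" for W c
  proof -
    have "Bd x (Bd y W) c + Bd y (Bd W x) c + Bd W (Bd x y) c = 0" by (rule lie_jacobi[OF L])
    moreover have "Bd W x = (\<lambda>k. - Bd x W k)" "Bd W (Bd x y) = (\<lambda>k. - Bd (Bd x y) W k)" by (rule Bd_skew)+
    ultimately show ?thesis by (simp add: Bd_lin)
  qed
  show "ad_tensor Bd (Bd x y) t u v = ad_tensor Bd x (ad_tensor Bd y t) u v - ad_tensor Bd y (ad_tensor Bd x t) u v"
    unfolding ad_vec[of x "ad_tensor Bd y t"] ad_vec[of y "ad_tensor Bd x t"] colad rowad
    by (simp add: Bd_lin ad_vec cross[of x y] cross[of y x] jac[symmetric])
qed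

lemma bialg: "lie_bialgebra Bd (coboundary Bd rt)"
  unfolding lie_bialgebra_def
proof (intro conjI allI)
  show "lie_algebra Bd" by (rule L)
  show "lie_algebra (cobracket_dual (coboundary Bd rt))" by (rule lie_cobr)
next
  fix x y :: "'n vec" and a b :: real
  show "coboundary Bd rt (\<lambda>i. a * x i + b * y i) = (\<lambda>u v. a * coboundary Bd rt x u v + b * coboundary Bd rt y u v)"
    unfolding coboundary_def by (intro ext) (simp add: ad_vec Bd_lin algebra_simps)
next
  fix x :: "'n vec" and u v
  show "coboundary Bd rt x u v = - coboundary Bd rt x v u"
    unfolding coboundary_def ad_vec rt_col unfolding rt_row Rm_def Rp_def
    using ad_f_skew[of x v u] by (simp add: Bd_lin)
next
  fix x y :: "'n vec"
  show "coboundary Bd rt (Bd x y) = (\<lambda>u v. ad_tensor Bd x (coboundary Bd rt y) u v - ad_tensor Bd y (coboundary Bd rt x) u v)"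
    unfolding coboundary_def by (rule ad_cocycle)
qed

lemma main_generic: "cybe_II Bd rt \<and> invariant_tensor Bd (sym_part rt) \<and> bij (tensor_map (sym_part rt))
   \<and> factorizable_typeII Bd rt"
  unfolding factorizable_typeII_def typeII_quasitriangular_def
  using cybeII invariant bij_sym bialg by blast

end



lemma bil_expand_gen:
  assumes l1: "\<And>z. lin (\<lambda>x. f x z)" and l2: "\<And>z. lin (f z)"
  shows "f x y k = (\<Sum>p\<in>UNIV. \<Sum>q\<in>UNIV. x p * y q * f (bv p) (bv q) k)"
proof -
  have "f x y k = (\<Sum>p\<in>UNIV. x p * f (bv p) y k)" using lin_expand'[OF l1] .
  also have "\<dots> = (\<Sum>p\<in>UNIV. x p * (\<Sum>q\<in>UNIV. y q * f (bv p) (bv q) k))"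
  proof -
    have "f (bv p) y k = (\<Sum>q\<in>UNIV. y q * f (bv p) (bv q) k)" for p
      using lin_expand'[OF l2[of "bv p"], of y k] by simp
    then show ?thesis by simp
  qed
  finally show ?thesis by (simp add: sum_distrib_left mult.assoc)
qed

lemma bil_ext:
  assumes "\<And>z. lin (\<lambda>x. f x z)" "\<And>z. lin (f z)" "\<And>z. lin (\<lambda>x. g x z)" "\<And>z. lin (g z)"
    and "\<And>p q. f (bv p) (bv q) = g (bv p) (bv q)"
  shows "f x y = g x y"
proof (rule ext)
  fix k
  show "f x y k = g x y k"
    unfolding bil_expand_gen[where f=f and x=x and y=y and k=k, OF assms(1,2)]
      bil_expand_gen[where f=g and x=x and y=y and k=k, OF assms(3,4)] assms(5) ..
qed


lemma lie_transfer:
  fixes T :: "('a::finite) vec \<Rightarrow> ('b::finite) vec" and Bd :: "'a bracket" and S :: "'b bracket"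
  assumes lT: "lin T" and iT: "inj T" and h: "\<And>X Y. T (Bd X Y) = S (T X) (T Y)" and LS: "lie_algebra S"
  shows "lie_algebra Bd"
  unfolding lie_algebra_def
proof (intro conjI allI)
  fix x y z :: "'a vec" and a b :: real
  have "T (Bd (\<lambda>i. a * x i + b * y i) z) = T (\<lambda>k. a * Bd x z k + b * Bd y z k)"
    unfolding h linD[OF lT] linD[OF lie_lin1[OF LS]] ..
  then show "Bd (\<lambda>i. a * x i + b * y i) z = (\<lambda>k. a * Bd x z k + b * Bd y z k)" by (rule injD[OF iT])
  have "T (Bd z (\<lambda>i. a * x i + b * y i)) = T (\<lambda>k. a * Bd z x k + b * Bd z y k)"
    unfolding h linD[OF lT] linD[OF lie_lin2[OF LS]] ..
  then show "Bd z (\<lambda>i. a * x i + b * y i) = (\<lambda>k. a * Bd z x k + b * Bd z y k)" by (rule injD[OF iT])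
next
  fix x :: "'a vec"
  have "T (Bd x x) = T (\<lambda>k. 0)" unfolding h lie_self[OF LS] lin_zero[OF lT] ..
  then show "Bd x x = (\<lambda>k. 0)" by (rule injD[OF iT])
next
  fix x y z :: "'a vec"
  have "T (\<lambda>k. Bd x (Bd y z) k + Bd y (Bd z x) k + Bd z (Bd x y) k) = T (\<lambda>k. 0)"
    unfolding lin_add[OF lT] h lin_zero[OF lT] using lie_jacobi[OF LS] by simp
  then show "(\<lambda>k. Bd x (Bd y z) k + Bd y (Bd z x) k + Bd z (Bd x y) k) = (\<lambda>k. 0)" by (rule injD[OF iT])
qed

locale gctx =
  fixes B :: "('i::finite) bracket" and r :: "'i tensor2"
  assumes tri: "triangular B r" and bj: "bij (tensor_map r)"
begin

abbreviation rho where "rho \<equiv> tensor_map r"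
abbreviation psi where "psi \<equiv> inv (tensor_map r)"

lemma L: "lie_algebra B" using tri unfolding triangular_def by blast
lemma rskew: "r p q = - r q p" using tri unfolding triangular_def by blast
lemma cyb: "cybe B r" using tri unfolding triangular_def by blast

lemma B_add1: "B (\<lambda>i. x i + y i) z = (\<lambda>k. B x z k + B y z k)"
  using lin_add[OF lie_lin1[OF L]] by simp
lemma B_diff1: "B (\<lambda>i. x i - y i) z = (\<lambda>k. B x z k - B y z k)"
  using lin_diff[OF lie_lin1[OF L]] by simp
lemma B_smult1: "B (\<lambda>i. a * x i) z = (\<lambda>k. a * B x z k)"
  using lin_smult[OF lie_lin1[OF L]] by simp
lemma B_neg1: "B (\<lambda>i. - x i) z = (\<lambda>k. - B x z k)"
  using lin_neg[OF lie_lin1[OF L]] by simp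
lemma B_add2: "B z (\<lambda>i. x i + y i) = (\<lambda>k. B z x k + B z y k)"
  using lin_add[OF lie_lin2[OF L]] by simp
lemma B_diff2: "B z (\<lambda>i. x i - y i) = (\<lambda>k. B z x k - B z y k)"
  using lin_diff[OF lie_lin2[OF L]] by simp
lemma B_smult2: "B z (\<lambda>i. a * x i) = (\<lambda>k. a * B z x k)"
  using lin_smult[OF lie_lin2[OF L]] by simp
lemma B_neg2: "B z (\<lambda>i. - x i) = (\<lambda>k. - B z x k)"
  using lin_neg[OF lie_lin2[OF L]] by simp
lemmas B_lin = B_add1 B_diff1 B_smult1 B_neg1 B_add2 B_diff2 B_smult2 B_neg2
lemma B_skew: "B y x = (\<lambda>k. - B x y k)" using lie_skew[OF L] .

lemma rho_lin: "lin rho"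
  unfolding lin_def tensor_map_def by (simp add: algebra_simps sum.distrib sum_distrib_left)

lemma rho_psi: "rho (psi x) = x" using bj by (simp add: bij_def surj_f_inv_f)
lemma psi_rho: "psi (rho a) = a" using bj by (simp add: bij_def inv_f_f)
lemma rho_inj: "rho a = rho b \<Longrightarrow> a = b" using bj by (metis psi_rho)

lemma psi_lin: "lin psi"
proof (rule lin_I)
  fix x y :: "'i vec" and a b :: real
  have "rho (\<lambda>k. a * psi x k + b * psi y k) = (\<lambda>i. a * x i + b * y i)"
    using linD[OF rho_lin, of a "psi x" b "psi y"] by (simp add: rho_psi)
  then show "psi (\<lambda>i. a * x i + b * y i) = (\<lambda>k. a * psi x k + b * psi y k)"
    by (metis psi_rho)
qed

lemmas rho_add = lin_add[OF rho_lin] and rho_diff = lin_diff[OF rho_lin] and rho_smult = lin_smult[OF rho_lin]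
  and rho_neg = lin_neg[OF rho_lin]
lemmas psi_add = lin_add[OF psi_lin] and psi_diff = lin_diff[OF psi_lin] and psi_smult = lin_smult[OF psi_lin]
  and psi_neg = lin_neg[OF psi_lin]

lemma rho_skew: "pair (rho a) b = - pair a (rho b)"
proof -
  have "pair (rho a) b = (\<Sum>j\<in>UNIV. \<Sum>i\<in>UNIV. a i * r i j * b j)"
    unfolding pair_def tensor_map_def by (simp add: sum_distrib_right)
  also have "\<dots> = (\<Sum>i\<in>UNIV. \<Sum>j\<in>UNIV. a i * r i j * b j)" by (rule sum.swap)
  also have "\<dots> = - (\<Sum>i\<in>UNIV. \<Sum>j\<in>UNIV. a i * (b j * r j i))"
  proof -
    have e: "a i * r i j * b j = - (a i * (b j * r j i))" for i j using rskew[of j i] by simp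
    show ?thesis by (simp only: e sum_negf)
  qed
  also have "\<dots> = - pair a (rho b)"
    unfolding pair_def tensor_map_def by (simp add: sum_distrib_left)
  finally show ?thesis .
qed

lemma psi_skew: "pair (psi x) y = - pair x (psi y)"
  using rho_skew[of "psi x" "psi y"] by (simp add: rho_psi)

lemma coad_pair: "pair (coad B x a) y = - pair a (B x y)"
proof -
  have "pair (coad B x a) y = (\<Sum>j\<in>UNIV. y j * (- pair a (B x (bv j))))"
    unfolding coad_def pair_def[of _ y] by (simp add: mult.commute)
  also have "\<dots> = - pair a (\<lambda>k. \<Sum>j\<in>UNIV. y j * B x (bv j) k)"
    by (simp add: pair_sum2 sum_negf)
  also have "\<dots> = - pair a (B x y)"
    using lin_expand[OF lie_lin2[OF L], of x y] by simp
  finally show ?thesis .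
qed

lemma coad_lin2: "lin (coad B x)"
  by (rule lin_I) (simp add: coad_def pair_simps algebra_simps)
lemma coad_lin1: "lin (\<lambda>x. coad B x a)"
  by (rule lin_I) (simp add: coad_def B_lin pair_simps algebra_simps)

lemma dual_br_lin2: "lin (dual_br B r a)"
proof (rule lin_I)
  fix x y :: "'i vec" and c d :: real
  show "dual_br B r a (\<lambda>i. c * x i + d * y i) = (\<lambda>k. c * dual_br B r a x k + d * dual_br B r a y k)"
    unfolding dual_br_def
    using linD[OF coad_lin2[of "rho a"], of c x d y] linD[OF rho_lin, of c x d y]
      linD[OF coad_lin1[of a], of c "rho x" d "rho y"]
    by (simp add: algebra_simps)
qed

lemma dual_br_lin1: "lin (\<lambda>a. dual_br B r a b)"
proof (rule lin_I)
  fix x y :: "'i vec" and c d :: real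
  show "dual_br B r (\<lambda>i. c * x i + d * y i) b = (\<lambda>k. c * dual_br B r x b k + d * dual_br B r y b k)"
    unfolding dual_br_def
    using linD[OF coad_lin2[of "rho b"], of c x d y] linD[OF rho_lin, of c x d y]
      linD[OF coad_lin1[of b], of c "rho x" d "rho y"]
    by (simp add: algebra_simps)
qed

lemma dual_br_pair: "pair (dual_br B r a b) y = - pair b (B (rho a) y) + pair a (B (rho b) y)"
  unfolding dual_br_def by (simp add: pair_simps coad_pair)

lemma coad_dual_pair: "pair (coad_dual B r a x) c = - pair x (dual_br B r a c)"
proof -
  have "pair (coad_dual B r a x) c = (\<Sum>j\<in>UNIV. c j * (- pair x (dual_br B r a (bv j))))"
    unfolding coad_dual_def pair_def[of _ c] by (simp add: mult.commute)
  also have "\<dots> = - pair x (\<lambda>k. \<Sum>j\<in>UNIV. c j * dual_br B r a (bv j) k)"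
    by (simp add: pair_sum2 sum_negf)
  also have "\<dots> = - pair x (dual_br B r a c)"
    using lin_expand[OF dual_br_lin2, of a c] by simp
  finally show ?thesis .
qed

lemma r_row: "r u = rho (bv u)"
proof (rule ext)
  fix j
  have "rho (bv u) j = (\<Sum>i\<in>UNIV. if i = u then r i j else 0)"
    unfolding tensor_map_def bv_def by (rule sum.cong) auto
  then show "r u j = rho (bv u) j" by simp
qed

lemma cyb_basis: "B (rho (bv v)) (rho (bv w)) u - B (rho (bv u)) (rho (bv w)) v + B (rho (bv u)) (rho (bv v)) w = 0"
proof -
  have col: "(\<lambda>p. r p v) = (\<lambda>p. - rho (bv v) p)" for v
    by (rule ext) (simp add: rskew[of _ v] r_row[symmetric])
  have "cybe_lhs B r u v w = 0" using cyb unfolding cybe_def by blast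
  then show ?thesis
    unfolding cybe_lhs_def T12_13_vec[OF L] T12_23_vec[OF L] T13_23_vec[OF L] col
    by (simp add: B_lin r_row)
qed

lemma pair_rho_dual: "pair c (rho (dual_br B r a b)) = pair b (B (rho a) (rho c)) - pair a (B (rho b) (rho c))"
proof -
  have "pair c (rho (dual_br B r a b)) = - pair (rho c) (dual_br B r a b)"
    using rho_skew[of c "dual_br B r a b"] by simp
  also have "\<dots> = - pair (dual_br B r a b) (rho c)" by (simp add: pair_comm)
  finally show ?thesis by (simp add: dual_br_pair)
qed

lemma L1: "rho (dual_br B r a b) = B (rho a) (rho b)"
proof (rule bil_ext[where f="\<lambda>a b. rho (dual_br B r a b)" and g="\<lambda>a b. B (rho a) (rho b)"])
  show "lin (\<lambda>x. rho (dual_br B r x z))" for z using lin_comp[OF rho_lin dual_br_lin1] by simp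
  show "lin (\<lambda>x. rho (dual_br B r z x))" for z using lin_comp[OF rho_lin dual_br_lin2] by simp
  show "lin (\<lambda>x. B (rho x) (rho z))" for z using lin_comp[OF lie_lin1[OF L] rho_lin] by simp
  show "lin (\<lambda>x. B (rho z) (rho x))" for z using lin_comp[OF lie_lin2[OF L] rho_lin] by simp
  fix p q
  show "rho (dual_br B r (bv p) (bv q)) = B (rho (bv p)) (rho (bv q))"
  proof (rule ext)
    fix w
    have "rho (dual_br B r (bv p) (bv q)) w = pair (bv w) (rho (dual_br B r (bv p) (bv q)))" by (simp add: pair_bv1)
    also have "\<dots> = B (rho (bv p)) (rho (bv w)) q - B (rho (bv q)) (rho (bv w)) p"
      by (simp add: pair_rho_dual pair_bv1)
    also have "\<dots> = B (rho (bv p)) (rho (bv q)) w" using cyb_basis[of q w p] by simp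
    finally show "rho (dual_br B r (bv p) (bv q)) w = B (rho (bv p)) (rho (bv q)) w" .
  qed
qed

lemma L2: "coad_dual B r a y = (\<lambda>k. B (rho a) y k + rho (coad B y a) k)"
proof (rule vec_eq_pair)
  fix c
  have "pair c (coad_dual B r a y) = - pair y (dual_br B r a c)" by (subst pair_comm) (rule coad_dual_pair)
  also have "\<dots> = pair c (B (rho a) y) - pair a (B (rho c) y)"
    by (simp add: pair_comm[of y] dual_br_pair)
  also have "pair c (rho (coad B y a)) = - pair a (B (rho c) y)"
  proof -
    have "pair c (rho (coad B y a)) = - pair (rho c) (coad B y a)"
      using rho_skew[of c "coad B y a"] by simp
    also have "\<dots> = pair a (B y (rho c))" by (simp add: pair_comm[of "rho c"] coad_pair)
    also have "\<dots> = - pair a (B (rho c) y)" using B_skew[of y "rho c"] by (simp add: pair_simps)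
    finally show ?thesis .
  qed
  ultimately show "pair c (coad_dual B r a y) = pair c (\<lambda>k. B (rho a) y k + rho (coad B y a) k)"
    by (simp add: pair_simps)
qed

definition Q where "Q x u = rho (coad B x (psi u))"

lemma Q_lin1: "lin (\<lambda>x. Q x u)"
  unfolding Q_def using lin_comp[OF rho_lin coad_lin1] by simp
lemma Q_lin2: "lin (Q x)"
  unfolding Q_def using lin_comp[OF rho_lin lin_comp[OF coad_lin2 psi_lin]] by simp

lemma rho_coad: "rho (coad B x a) = Q x (rho a)"
  unfolding Q_def psi_rho ..

lemma Q_anti: "Q x v k - Q v x k = B x v k"
proof -
  have "rho (dual_br B r (psi x) (psi v)) = B x v" unfolding L1 rho_psi ..
  moreover have "rho (dual_br B r (psi x) (psi v)) = (\<lambda>k. Q x v k - Q v x k)"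
    unfolding dual_br_def rho_psi Q_def by (rule rho_diff)
  ultimately show ?thesis by metis
qed


lemmas Q_add1 = lin_add[OF Q_lin1] and Q_diff1 = lin_diff[OF Q_lin1] and Q_smult1 = lin_smult[OF Q_lin1]
  and Q_neg1 = lin_neg[OF Q_lin1]
lemmas Q_add2 = lin_add[OF Q_lin2] and Q_diff2 = lin_diff[OF Q_lin2] and Q_smult2 = lin_smult[OF Q_lin2]
  and Q_neg2 = lin_neg[OF Q_lin2]
lemmas Q_lin = Q_add1 Q_diff1 Q_smult1 Q_neg1 Q_add2 Q_diff2 Q_smult2 Q_neg2

lemmas coad_add1 = lin_add[OF coad_lin1] and coad_diff1 = lin_diff[OF coad_lin1]
  and coad_smult1 = lin_smult[OF coad_lin1] and coad_neg1 = lin_neg[OF coad_lin1]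
lemmas coad_add2 = lin_add[OF coad_lin2] and coad_diff2 = lin_diff[OF coad_lin2]
  and coad_smult2 = lin_smult[OF coad_lin2] and coad_neg2 = lin_neg[OF coad_lin2]
lemmas coad_lin = coad_add1 coad_diff1 coad_smult1 coad_neg1 coad_add2 coad_diff2 coad_smult2 coad_neg2

abbreviation Bd where "Bd \<equiv> double_br B r"

lemma dfst_dpair[simp]: "dfst (dpair x a) = x" unfolding dfst_def dpair_def by simp
lemma dsnd_dpair[simp]: "dsnd (dpair x a) = a" unfolding dsnd_def dpair_def by simp

lemma dfst_Bd: "dfst (Bd X Y) = (\<lambda>k. B (dfst X) (dfst Y) k + B (rho (dsnd X)) (dfst Y) k
    + Q (dfst Y) (rho (dsnd X)) k - B (rho (dsnd Y)) (dfst X) k - Q (dfst X) (rho (dsnd Y)) k)"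
  unfolding double_br_def dfst_dpair L2 rho_coad by (simp add: algebra_simps)

lemma rdsnd_Bd: "rho (dsnd (Bd X Y)) = (\<lambda>k. B (rho (dsnd X)) (rho (dsnd Y)) k
    + Q (dfst X) (rho (dsnd Y)) k - Q (dfst Y) (rho (dsnd X)) k)"
  unfolding double_br_def dsnd_dpair by (simp add: rho_add rho_diff L1 rho_coad)

lemma dfst_J: "dfst (Jmap r lam mu X) = (\<lambda>k. lam * rho (dsnd X) k + mu * dfst X k)"
  unfolding Jmap_def by simp

lemma rdsnd_J: "rho (dsnd (Jmap r lam mu X)) = (\<lambda>k. ((-1 - mu^2) / lam) * dfst X k - mu * rho (dsnd X) k)"
  unfolding Jmap_def dsnd_dpair rho_diff rho_smult rho_psi ..

lemma comp_eq: "dfst V = dfst W \<Longrightarrow> rho (dsnd V) = rho (dsnd W) \<Longrightarrow> V = W"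
proof -
  assume a: "dfst V = dfst W" and b: "rho (dsnd V) = rho (dsnd W)"
  from b have b': "dsnd V = dsnd W" by (rule rho_inj)
  show "V = W"
  proof (rule ext)
    fix k show "V k = W k"
    proof (cases k)
      case (Inl i) then show ?thesis using fun_cong[OF a, of i] unfolding dfst_def by simp
    next
      case (Inr i) then show ?thesis using fun_cong[OF b', of i] unfolding dsnd_def by simp
    qed
  qed
qed

lemma dfst_add: "dfst (\<lambda>k. A k + C k) = (\<lambda>i. dfst A i + dfst C i)" unfolding dfst_def by simp
lemma dsnd_add: "dsnd (\<lambda>k. A k + C k) = (\<lambda>i. dsnd A i + dsnd C i)" unfolding dsnd_def by simp
lemma dfst_diff: "dfst (\<lambda>k. A k - C k) = (\<lambda>i. dfst A i - dfst C i)" unfolding dfst_def by simp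
lemma dsnd_diff: "dsnd (\<lambda>k. A k - C k) = (\<lambda>i. dsnd A i - dsnd C i)" unfolding dsnd_def by simp
lemma dfst_smult: "dfst (\<lambda>k. c * A k) = (\<lambda>i. c * dfst A i)" unfolding dfst_def by simp
lemma dsnd_smult: "dsnd (\<lambda>k. c * A k) = (\<lambda>i. c * dsnd A i)" unfolding dsnd_def by simp
lemma dfst_zero: "dfst (\<lambda>k. 0) = (\<lambda>i. 0)" unfolding dfst_def by simp
lemma dsnd_zero: "dsnd (\<lambda>k. 0) = (\<lambda>i. 0)" unfolding dsnd_def by simp
lemmas d_lin = dfst_add dsnd_add dfst_diff dsnd_diff dfst_smult dsnd_smult dfst_zero dsnd_zero

lemma nij_D:
  assumes lam: "lam \<noteq> 0"
  shows "Bd (Jmap r lam mu X) (Jmap r lam mu Y) =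
    (\<lambda>k. Jmap r lam mu (Bd (Jmap r lam mu X) Y) k + Jmap r lam mu (Bd X (Jmap r lam mu Y)) k + Bd X Y k)"
proof (rule comp_eq)
  let ?J = "Jmap r lam mu"
  define x where "x = dfst X"
  define u where "u = rho (dsnd X)"
  define y where "y = dfst Y"
  define v where "v = rho (dsnd Y)"
  define c where "c = (-1 - mu^2) / lam"
  have hc: "c * lam = -1 - mu^2" unfolding c_def using lam by simp
  have hc2: "c * (lam * z) = - z - mu * (mu * z)" for z
  proof -
    have "c * (lam * z) = (c * lam) * z" by (simp only: mult.assoc)
    also have "\<dots> = (-1 - mu^2) * z" by (simp only: hc)
    finally show ?thesis by (simp add: power2_eq_square algebra_simps)
  qed
  have nb: "B y x k = - B x y k" "B v x k = - B x v k" "B y u k = - B u y k" "B v u k = - B u v k" for k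
    using B_skew by metis+
  have nq: "Q y x k = Q x y k - B x y k" "Q v x k = Q x v k - B x v k"
     "Q y u k = Q u y k - B u y k" "Q v u k = Q u v k - B u v k" for k
    using Q_anti[of x y k] Q_anti[of x v k] Q_anti[of u y k] Q_anti[of u v k] nb by auto
  have fJ: "dfst (?J Z) = (\<lambda>k. lam * rho (dsnd Z) k + mu * dfst Z k)" for Z by (rule dfst_J)
  have rJ: "rho (dsnd (?J Z)) = (\<lambda>k. c * dfst Z k - mu * rho (dsnd Z) k)" for Z
    unfolding c_def by (rule rdsnd_J)
  show "dfst (Bd (?J X) (?J Y)) = dfst (\<lambda>k. ?J (Bd (?J X) Y) k + ?J (Bd X (?J Y)) k + Bd X Y k)"
  proof (rule ext)
    fix k
    show "dfst (Bd (?J X) (?J Y)) k = dfst (\<lambda>k. ?J (Bd (?J X) Y) k + ?J (Bd X (?J Y)) k + Bd X Y k) k"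
      unfolding d_lin fJ rJ dfst_Bd rdsnd_Bd
      unfolding x_def[symmetric] u_def[symmetric] y_def[symmetric] v_def[symmetric]
      by (simp add: B_lin Q_lin nb nq algebra_simps hc hc2)
  qed
  show "rho (dsnd (Bd (?J X) (?J Y))) = rho (dsnd (\<lambda>k. ?J (Bd (?J X) Y) k + ?J (Bd X (?J Y)) k + Bd X Y k))"
  proof (rule ext)
    fix k
    show "rho (dsnd (Bd (?J X) (?J Y))) k = rho (dsnd (\<lambda>k. ?J (Bd (?J X) Y) k + ?J (Bd X (?J Y)) k + Bd X Y k)) k"
      unfolding d_lin rho_add fJ rJ dfst_Bd rdsnd_Bd
      unfolding x_def[symmetric] u_def[symmetric] y_def[symmetric] v_def[symmetric]
      by (simp add: B_lin Q_lin nb nq algebra_simps hc hc2)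
  qed
qed


lemma D_eq: "dfst V = dfst W \<Longrightarrow> dsnd V = dsnd W \<Longrightarrow> V = W"
proof -
  assume a: "dfst V = dfst W" and b: "dsnd V = dsnd W"
  show "V = W"
  proof (rule ext)
    fix k show "V k = W k"
    proof (cases k)
      case (Inl i) then show ?thesis using fun_cong[OF a, of i] unfolding dfst_def by simp
    next
      case (Inr i) then show ?thesis using fun_cong[OF b, of i] unfolding dsnd_def by simp
    qed
  qed
qed

lemma coad_rep: "(\<lambda>k. coad B x (coad B y c) k - coad B y (coad B x c) k) = coad B (B x y) c"
proof (rule vec_eq_pair)
  fix w
  have e: "pair w (coad B x (coad B y c)) = pair c (B y (B x w))" for x y
    by (simp add: pair_comm[of w] coad_pair)
  have j: "B x (B y w) k + B y (B w x) k + B w (B x y) k = 0" for k by (rule lie_jacobi[OF L])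
  have s: "B y (B x w) = (\<lambda>k. - B y (B w x) k)" "B (B x y) w = (\<lambda>k. - B w (B x y) k)"
    using B_skew[of w x] B_skew[of w "B x y"] by (simp_all add: B_lin)
  have "pair c (B y (B x w)) - pair c (B x (B y w)) = - pair c (B (B x y) w)"
  proof -
    have "(\<lambda>k. B y (B x w) k - B x (B y w) k) = (\<lambda>k. - B (B x y) w k)"
    proof (rule ext)
      fix k
      have "B y (B x w) k = - B y (B w x) k" "B (B x y) w k = - B w (B x y) k" using s by simp_all
      then show "B y (B x w) k - B x (B y w) k = - B (B x y) w k" using j[of k] by linarith
    qed
    then have "pair c (\<lambda>k. B y (B x w) k - B x (B y w) k) = pair c (\<lambda>k. - B (B x y) w k)" by simp
    then show ?thesis by (simp add: pair_simps)
  qed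
  then show "pair w (\<lambda>k. coad B x (coad B y c) k - coad B y (coad B x c) k) = pair w (coad B (B x y) c)"
    by (simp add: pair_simps e pair_comm[of w "coad B (B x y) c"] coad_pair)
qed

definition Sd where "Sd X Y = dpair (B (dfst X) (dfst Y)) (\<lambda>k. coad B (dfst X) (dsnd Y) k - coad B (dfst Y) (dsnd X) k)"
definition Th where "Th X = dpair (\<lambda>k. dfst X k + rho (dsnd X) k) (dsnd X)"

lemma lie_Sd: "lie_algebra Sd"
  unfolding lie_algebra_def
proof (intro conjI allI)
  fix x y z :: "('i + 'i) vec" and a b :: real
  show "Sd (\<lambda>i. a * x i + b * y i) z = (\<lambda>k. a * Sd x z k + b * Sd y z k)"
    by (rule D_eq) (simp_all add: Sd_def d_lin B_lin coad_lin algebra_simps)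
  show "Sd z (\<lambda>i. a * x i + b * y i) = (\<lambda>k. a * Sd z x k + b * Sd z y k)"
    by (rule D_eq) (simp_all add: Sd_def d_lin B_lin coad_lin algebra_simps)
next
  fix x :: "('i + 'i) vec"
  show "Sd x x = (\<lambda>k. 0)"
    by (rule D_eq) (simp_all add: Sd_def d_lin lie_self[OF L])
next
  fix x y z :: "('i + 'i) vec"
  show "(\<lambda>k. Sd x (Sd y z) k + Sd y (Sd z x) k + Sd z (Sd x y) k) = (\<lambda>k. 0)"
  proof (rule D_eq)
    show "dfst (\<lambda>k. Sd x (Sd y z) k + Sd y (Sd z x) k + Sd z (Sd x y) k) = dfst (\<lambda>k. 0)"
      using lie_jacobi[OF L] by (simp add: Sd_def d_lin)
    have r1: "coad B b (coad B a c) k = coad B a (coad B b c) k - coad B (B a b) c k" for a b c k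
      using fun_cong[OF coad_rep[of a b c], of k] by simp
    note q1 = r1[of "dfst x" "dfst y" "dsnd z"] and q2 = r1[of "dfst y" "dfst z" "dsnd x"]
      and q3 = r1[of "dfst z" "dfst x" "dsnd y"]
    show "dsnd (\<lambda>k. Sd x (Sd y z) k + Sd y (Sd z x) k + Sd z (Sd x y) k) = dsnd (\<lambda>k. 0)"
      by (rule ext) (simp add: Sd_def d_lin coad_lin q1 q2 q3 B_skew[of "dfst z" "dfst y"]
          B_skew[of "dfst x" "dfst z"] B_skew[of "dfst y" "dfst x"])
  qed
qed

lemma Th_lin: "lin Th"
  by (rule lin_I, rule D_eq) (simp_all add: Th_def d_lin rho_add rho_smult algebra_simps)

lemma Th_inj: "inj Th"
proof (rule injI)
  fix X Y assume a: "Th X = Th Y"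
  have s: "dsnd X = dsnd Y" using arg_cong[OF a, of dsnd] by (simp add: Th_def)
  have "dfst (Th X) = dfst (Th Y)" using a by simp
  then have "dfst X = dfst Y" using s by (simp add: Th_def fun_eq_iff)
  then show "X = Y" using s by (rule D_eq)
qed

lemma Th_hom: "Th (Bd X Y) = Sd (Th X) (Th Y)"
proof (rule D_eq)
  have nb: "B (rho (dsnd Y)) (dfst X) k = - B (dfst X) (rho (dsnd Y)) k" for k using B_skew by metis
  show "dfst (Th (Bd X Y)) = dfst (Sd (Th X) (Th Y))"
    unfolding Th_def Sd_def dfst_dpair dfst_Bd rdsnd_Bd
    by (rule ext) (simp add: B_lin nb)
  show "dsnd (Th (Bd X Y)) = dsnd (Sd (Th X) (Th Y))"
    unfolding Th_def Sd_def dsnd_dpair dfst_dpair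
    by (rule ext) (simp add: double_br_def dual_br_def coad_lin)
qed

lemma lie_Bd: "lie_algebra Bd"
  by (rule lie_transfer[where Bd="double_br B r" and S=Sd and T=Th, OF Th_lin Th_inj Th_hom lie_Sd])

lemma coad_pair2: "pair y (coad B x a) = - pair a (B x y)"
  by (simp add: pair_comm[of y] coad_pair)

lemma Bp_Th: "Bp (Th X) (Th Y) = Bp X Y"
  unfolding Bp_def Th_def using rho_skew[of "dsnd X" "dsnd Y"] by (simp add: pair_simps)

lemma Bp_Sd: "Bp (Sd X Y) Z = Bp X (Sd Y Z)"
proof -
  have s: "B (dfst Y) (dfst X) = (\<lambda>k. - B (dfst X) (dfst Y) k)" "B (dfst Z) (dfst X) = (\<lambda>k. - B (dfst X) (dfst Z) k)"
    by (rule B_skew)+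
  show ?thesis unfolding Bp_def Sd_def
    apply (simp add: pair_simps coad_pair coad_pair2 s pair_comm[of "dfst _" "B _ _"])
    by (rule pair_comm)
qed

lemma Bd_inv: "Bp (Bd X Y) Z = Bp X (Bd Y Z)"
proof -
  have "Bp (Bd X Y) Z = Bp (Th (Bd X Y)) (Th Z)" by (simp add: Bp_Th)
  also have "\<dots> = Bp (Sd (Th X) (Th Y)) (Th Z)" by (simp add: Th_hom)
  also have "\<dots> = Bp (Th X) (Sd (Th Y) (Th Z))" by (rule Bp_Sd)
  also have "\<dots> = Bp (Th X) (Th (Bd Y Z))" by (simp add: Th_hom)
  also have "\<dots> = Bp X (Bd Y Z)" by (rule Bp_Th)
  finally show ?thesis .
qed

end



lemma dfst_dpair0[simp]: "dfst (dpair x a) = x" unfolding dfst_def dpair_def by simp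
lemma dsnd_dpair0[simp]: "dsnd (dpair x a) = a" unfolding dsnd_def dpair_def by simp
lemma D_eq0: "dfst V = dfst W \<Longrightarrow> dsnd V = dsnd W \<Longrightarrow> V = W"
proof -
  assume a: "dfst V = dfst W" and b: "dsnd V = dsnd W"
  show "V = W"
  proof (rule ext)
    fix k show "V k = W k"
    proof (cases k)
      case (Inl i) then show ?thesis using fun_cong[OF a, of i] unfolding dfst_def by simp
    next
      case (Inr i) then show ?thesis using fun_cong[OF b, of i] unfolding dsnd_def by simp
    qed
  qed
qed
lemma dfst_add0: "dfst (\<lambda>k. A k + C k) = (\<lambda>i. dfst A i + dfst C i)" unfolding dfst_def by simp
lemma dsnd_add0: "dsnd (\<lambda>k. A k + C k) = (\<lambda>i. dsnd A i + dsnd C i)" unfolding dsnd_def by simp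
lemma dfst_smult0: "dfst (\<lambda>k. c * A k) = (\<lambda>i. c * dfst A i)" unfolding dfst_def by simp
lemma dsnd_smult0: "dsnd (\<lambda>k. c * A k) = (\<lambda>i. c * dsnd A i)" unfolding dsnd_def by simp

lemma pair_D: "pair (A :: ('i::finite + 'i) vec) C = pair (dfst A) (dfst C) + pair (dsnd A) (dsnd C)"
proof -
  have "pair A C = (\<Sum>k\<in>(UNIV::'i set) <+> (UNIV::'i set). A k * C k)"
    unfolding pair_def by simp
  also have "\<dots> = pair (dfst A) (dfst C) + pair (dsnd A) (dsnd C)"
    by (subst sum.Plus) (simp_all add: pair_def dfst_def dsnd_def o_def)
  finally show ?thesis .
qed

lemma dfst_bv_Inl: "dfst (bv (Inl i)) = bv i" unfolding dfst_def bv_def by auto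
lemma dsnd_bv_Inl: "dsnd (bv (Inl i)) = (\<lambda>j. 0)" unfolding dsnd_def bv_def by auto
lemma dfst_bv_Inr: "dfst (bv (Inr i)) = (\<lambda>j. 0)" unfolding dfst_def bv_def by auto
lemma dsnd_bv_Inr: "dsnd (bv (Inr i)) = bv i" unfolding dsnd_def bv_def by auto

lemma phi_eq: "phi X = dpair (dsnd X) (dfst X)"
proof (rule ext)
  fix k show "phi X k = dpair (dsnd X) (dfst X) k"
  proof (cases k)
    case (Inl i) then show ?thesis
      by (simp add: phi_def Bp_def dfst_bv_Inl dsnd_bv_Inl pair_simps dpair_def)
  next
    case (Inr i) then show ?thesis
      by (simp add: phi_def Bp_def dfst_bv_Inr dsnd_bv_Inr pair_simps dpair_def)
  qed
qed

lemma pair_phi: "pair (phi X) Y = Bp X Y"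
  unfolding phi_eq pair_D Bp_def by simp

lemma phi_phi: "phi (phi X) = X"
  by (rule D_eq0) (simp_all add: phi_eq)

lemma phi_sym: "pair (phi X) Y = pair X (phi Y)"
  unfolding pair_phi pair_comm[of X] pair_phi Bp_def by (simp add: pair_comm)

lemma phi_lin: "lin phi"
  by (rule lin_I, rule D_eq0) (simp_all add: phi_eq dfst_add0 dsnd_add0 dfst_smult0 dsnd_smult0)

lemma inv_phi: "inv phi = phi"
  by (rule inv_equality) (simp_all add: phi_phi)

context gctx
begin

lemma dsnd_J: "dsnd (Jmap r lam mu X) = (\<lambda>k. ((-1 - mu^2) / lam) * psi (dfst X) k - mu * dsnd X k)"
  unfolding Jmap_def by simp

lemma J_lin: "lin (Jmap r lam mu)"
  by (rule lin_I, rule D_eq)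
     (simp_all add: dfst_J dsnd_J d_lin rho_add rho_smult psi_add psi_smult algebra_simps)

lemma J_skew: "pair (phi (Jmap r lam mu X)) Y = - pair (phi X) (Jmap r lam mu Y)"
  unfolding pair_phi Bp_def dfst_J dsnd_J pair_add1 pair_add2 pair_diff1 pair_diff2 pair_smult1 pair_smult2
  using rho_skew[of "dsnd X" "dsnd Y"] psi_skew[of "dfst X" "dfst Y"]
  by (simp add: algebra_simps add_divide_distrib[symmetric])

lemma dbl_inst:
  assumes lam: "lam \<noteq> 0" and s: "\<sigma> * \<sigma> = 1"
  shows "dbl (double_br B r) phi (Jmap r lam mu) \<sigma>"
proof (unfold_locales)
  show "lie_algebra Bd" by (rule lie_Bd)
  show "lin phi" by (rule phi_lin)
  show "phi (phi X) = X" for X by (rule phi_phi)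
  show "pair (phi X) Y = pair X (phi Y)" for X Y by (rule phi_sym)
  show "pair (phi (Bd X Y)) Z = pair (phi X) (Bd Y Z)" for X Y Z by (simp add: pair_phi Bd_inv)
  show "lin (Jmap r lam mu)" by (rule J_lin)
  show "pair (phi (Jmap r lam mu X)) Y = - pair (phi X) (Jmap r lam mu Y)" for X Y by (rule J_skew)
  show "Bd (Jmap r lam mu X) (Jmap r lam mu Y) =
    (\<lambda>k. Jmap r lam mu (Bd (Jmap r lam mu X) Y) k + Jmap r lam mu (Bd X (Jmap r lam mu Y)) k + Bd X Y k)" for X Y
    by (rule nij_D[OF lam])
  show "\<sigma> * \<sigma> = 1" by (rule s)
qed

end

theorem proposition4p13:
  fixes B :: "('i::finite) bracket" and r :: "'i tensor2" and lam mu \<sigma> :: real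
  assumes "triangular B r"
    and "bij (tensor_map r)"
    and "lam \<noteq> 0"
    and "\<sigma> = 1 \<or> \<sigma> = -1"
  shows "cybe_II (double_br B r) (rtilde r lam mu \<sigma>)
       \<and> invariant_tensor (double_br B r) (sym_part (rtilde r lam mu \<sigma>))
       \<and> bij (tensor_map (sym_part (rtilde r lam mu \<sigma>)))
       \<and> factorizable_typeII (double_br B r) (rtilde r lam mu \<sigma>)"
proof -
  interpret g: gctx B r using assms(1,2) by (rule gctx.intro)
  have s: "\<sigma> * \<sigma> = 1" using assms(4) by auto
  interpret d: dbl "double_br B r" phi "Jmap r lam mu" \<sigma> by (rule g.dbl_inst[OF assms(3) s])
  have "rtilde r lam mu \<sigma> = d.rt" unfolding rtilde_def d.rt_def inv_phi ..
  then show ?thesis using d.main_generic by simp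
qed

end
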